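(* Consider two bits $B_1,B_2$ and two anti-bits $A_1,A_2$ in the state $\Phi_{B_1A_1}\otimes\Phi_{B_2A_2}$, where $\Phi=|\Phi\rangle\langle\Phi|$ and $|\Phi\rangle=(|0\rangle|0\rangle+|1\rangle|1\rangle)/\sqrt2$. For $i,j\in\{0,1\}$ and a bit $B$ and anti-bit $A$ let $|\phi_i^{(j)}\rangle_{BA}=|i\rangle_B|i\oplus j\rangle_A$ ($\oplus$ = addition mod 2). Let $\{|v_0\rangle,|v_1\rangle\}$ and $\{|w_0\rangle,|w_1\rangle\}$ be any two orthonormal bases of $\mathbb C^2$, with $|v_a\rangle=v_{a,0}|0\rangle+v_{a,1}|1\rangle$ and $|w_b\rangle=w_{b,0}|0\rangle+w_{b,1}|1\rangle$. Define, for $a,b,l\in\{0,1\}$, $|V_a^{(l)}\rangle=v_{a,0}|\phi_0^{(l)}\rangle_{B_1A_2}+v_{a,1}|\phi_1^{(l)}\rangle_{B_1A_2}$, $|W_b^{(l)}\rangle=w_{b,0}|\phi_l^{(l)}\rangle_{B_2A_1}+w_{b,1}|\phi_{l\oplus1}^{(l)}\rangle_{B_2A_1}$, $P_a=\sum_{l}|V_a^{(l)}\rangle\langle V_a^{(l)}|$ and $Q_b=\sum_l|W_b^{(l)}\rangle\langle W_b^{(l)}|$. Then $\{P_0,P_1\}$ is a valid measurement on the $(1,1)$-composite $B_1A_2$, $\{Q_0,Q_1\}$ is a valid measurement on the $(1,1)$-composite $B_2A_1$, and for all $a,b\in\{0,1\}$ $$\mathrm{Tr}\big[(P_a\otimes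 Q_b)(\Phi_{B_1A_1}\otimes\Phi_{B_2A_2})\big]=\tfrac12\,\big|v_{a,0}w_{b,0}+v_{a,1}w_{b,1}\big|^2,$$ which equals the probability of outcomes $(a,b)$ when the qubit measurements in bases $\{|v_a\rangle\}$ and $\{|w_b\rangle\}$ are performed on the two-qubit maximally entangled state $(|00\rangle+|11\rangle)/\sqrt2$. Consequently, with Alice holding $B_1A_2$ and Bob holding $B_2A_1$, local valid measurements on this state achieve the CHSH value $2\sqrt2$, violating the CHSH inequality.
   Context: Take $d=2$: bits and anti-bits each have Hilbert space $\mathbb C^2$ with computational basis $\{|0\rangle,|1\rangle\}$. For a bit $B$ and anti-bit $A$, the pure states of the $(1,1)$-composite $BA$ are unit vectors lying in the parity-0 subspace $\mathrm{span}\{|0\rangle|0\rangle,|1\rangle|1\rangle\}$ or in the parity-1 subspace $\mathrm{span}\{|0\rangle|1\rangle,|1\rangle|0\rangle\}$. For two bits and two anti-bits, pure states are unit vectors of the form $(U\otimes W)|\Psi'\rangle$ with $U$ a permutation of the bit factors, $W$ a permutation of the anti-bit factors and $|\Psi'\rangle$ having well-defined parity on each pair $(B_1A_1)$ and $(B_2A_2)$; states are convex combinations of projectors onto pure states. A valid measurement on a composite is a POVM whose elements are nonnegative linear combinations of projectors onto pure states of that composite; outcome probabilities are given by $\mathrm{Tr}[P\rho]$. The CHSH value is $\langle A_0B_0\rangle+\langle A_0B_1\rangle+\langle A_1B_0\rangle-\langle A_1B_1\rangle$ for two-outcome ($\pm1$) measurements $A_0,A_1$ of Alice and $B_0,B_1$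 of Bob; the CHSH inequality states that local hidden variable models give at most $2$. *)

theory Defs
  imports Complex_Main
begin

text \<open>Computational basis of C^2 indexed by bool: False = |0>, True = |1>.
  A vector of a (1,1)-composite (bit B, anti-bit A) is psi :: bool => bool => complex,
  psi b a = coefficient of |b>_B |a>_A.\<close>

type_synonym vec11 = "bool \<Rightarrow> bool \<Rightarrow> complex"
type_synonym op11 = "bool \<times> bool \<Rightarrow> bool \<times> bool \<Rightarrow> complex"

definition xor2 :: "bool \<Rightarrow> bool \<Rightarrow> bool" where
  "xor2 i j = (i \<noteq> j)"

definition pure11 :: "vec11 \<Rightarrow> bool" where
  "pure11 psi \<longleftrightarrow>
     (\<Sum>b\<in>UNIV. \<Sum>a\<in>UNIV. (cmod (psi b a))\<^sup>2) = 1 \<and>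
     ((\<forall>b a. b \<noteq> a \<longrightarrow> psi b a = 0) \<or> (\<forall>b a. b = a \<longrightarrow> psi b a = 0))"

definition proj11 :: "vec11 \<Rightarrow> op11" where
  "proj11 psi = (\<lambda>(b, a) (b', a'). psi b a * cnj (psi b' a'))"

definition id11 :: op11 where
  "id11 = (\<lambda>x y. if x = y then 1 else 0)"

definition admissible_effect11 :: "op11 \<Rightarrow> bool" where
  "admissible_effect11 P \<longleftrightarrow>
     (\<exists>(n::nat) (c::nat \<Rightarrow> real) (psi::nat \<Rightarrow> vec11).
        (\<forall>k<n. c k \<ge> 0 \<and> pure11 (psi k)) \<and>
        P = (\<lambda>x y. \<Sum>k<n. complex_of_real (c k) * proj11 (psi k) x y))"

definition valid_meas11 :: "(bool \<Rightarrow> op11) \<Rightarrow> bool" where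
  "valid_meas11 P \<longleftrightarrow>
     (\<forall>a. admissible_effect11 (P a)) \<and> (\<forall>x y. (\<Sum>a\<in>UNIV. P a x y) = id11 x y)"

definition onb2 :: "(bool \<Rightarrow> bool \<Rightarrow> complex) \<Rightarrow> bool" where
  "onb2 v \<longleftrightarrow> (\<forall>a a'. (\<Sum>i\<in>UNIV. v a i * cnj (v a' i)) = (if a = a' then 1 else 0))"

definition phi :: "bool \<Rightarrow> bool \<Rightarrow> vec11" where
  "phi i j = (\<lambda>b a. if b = i \<and> a = xor2 i j then 1 else 0)"

definition Vvec :: "(bool \<Rightarrow> bool \<Rightarrow> complex) \<Rightarrow> bool \<Rightarrow> bool \<Rightarrow> vec11" where
  "Vvec v a l = (\<lambda>b x. v a False * phi False l b x + v a True * phi True l b x)"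

definition Wvec :: "(bool \<Rightarrow> bool \<Rightarrow> complex) \<Rightarrow> bool \<Rightarrow> bool \<Rightarrow> vec11" where
  "Wvec w b l = (\<lambda>y x. w b False * phi l l y x + w b True * phi (xor2 l True) l y x)"

definition Pmeas :: "(bool \<Rightarrow> bool \<Rightarrow> complex) \<Rightarrow> bool \<Rightarrow> op11" where
  "Pmeas v a = (\<lambda>x y. \<Sum>l\<in>UNIV. proj11 (Vvec v a l) x y)"

definition Qmeas :: "(bool \<Rightarrow> bool \<Rightarrow> complex) \<Rightarrow> bool \<Rightarrow> op11" where
  "Qmeas w b = (\<lambda>x y. \<Sum>l\<in>UNIV. proj11 (Wvec w b l) x y)"

text \<open>Two bits and two anti-bits: basis index (b1, a1, b2, a2).\<close>
type_synonym idx4 = "bool \<times> bool \<times> bool \<times> bool"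
type_synonym op4 = "idx4 \<Rightarrow> idx4 \<Rightarrow> complex"

definition PhiVec :: vec11 where
  "PhiVec = (\<lambda>b a. if b = a then complex_of_real (1 / sqrt 2) else 0)"

definition rho4 :: op4 where
  "rho4 = (\<lambda>(b1, a1, b2, a2) (b1', a1', b2', a2').
     PhiVec b1 a1 * cnj (PhiVec b1' a1') * PhiVec b2 a2 * cnj (PhiVec b2' a2'))"

definition tensorPQ :: "op11 \<Rightarrow> op11 \<Rightarrow> op4" where
  "tensorPQ P Q = (\<lambda>(b1, a1, b2, a2) (b1', a1', b2', a2').
     P (b1, a2) (b1', a2') * Q (b2, a1) (b2', a1'))"

definition trace4 :: "op4 \<Rightarrow> complex" where
  "trace4 M = (\<Sum>x\<in>UNIV. M x x)"

definition mult4 :: "op4 \<Rightarrow> op4 \<Rightarrow> op4" where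
  "mult4 M N = (\<lambda>x z. \<Sum>y\<in>UNIV. M x y * N y z)"

definition prob4 :: "op11 \<Rightarrow> op11 \<Rightarrow> complex" where
  "prob4 P Q = trace4 (mult4 (tensorPQ P Q) rho4)"

definition pm1 :: "bool \<Rightarrow> real" where
  "pm1 a = (if a then -1 else 1)"

definition corr :: "(bool \<Rightarrow> bool \<Rightarrow> op11) \<Rightarrow> (bool \<Rightarrow> bool \<Rightarrow> op11) \<Rightarrow> bool \<Rightarrow> bool \<Rightarrow> real" where
  "corr PA QB x y = (\<Sum>a\<in>UNIV. \<Sum>b\<in>UNIV. pm1 a * pm1 b * Re (prob4 (PA x a) (QB y b)))"

definition chsh :: "(bool \<Rightarrow> bool \<Rightarrow> op11) \<Rightarrow> (bool \<Rightarrow> bool \<Rightarrow> op11) \<Rightarrow> real" where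
  "chsh PA QB = corr PA QB False False + corr PA QB False True
              + corr PA QB True False - corr PA QB True True"

end

theory Submission
  imports Defs
begin


lemma sb: "(\<Sum>x\<in>(UNIV::bool set). f x) = f False + f True" by (simp add: UNIV_bool)
lemma sp: "(\<Sum>x\<in>(UNIV::('a::finite\<times>'b::finite) set). f x) = (\<Sum>a\<in>UNIV. \<Sum>b\<in>UNIV. f (a,b))"
  using sum.cartesian_product[of "\<lambda>a b. f (a,b)" UNIV UNIV] by simp
lemma Vvec_eq: "Vvec v a l b x = (if x = xor2 b l then v a b else 0)"
  by (cases b; cases l; cases x; simp add: Vvec_def phi_def xor2_def)
lemma Wvec_eq: "Wvec w c l y x = (if x = xor2 y l then w c x else 0)"
  by (cases y; cases l; cases x; simp add: Wvec_def phi_def xor2_def)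

lemma PhiVec_eq: "PhiVec b a = (if b = a then complex_of_real (1 / sqrt 2) else 0)"
  by (simp add: PhiVec_def)
lemma k4: "complex_of_real (1 / sqrt 2) * cnj (complex_of_real (1 / sqrt 2)) * complex_of_real (1 / sqrt 2) * cnj (complex_of_real (1 / sqrt 2)) = 1/4"
proof -
  have "(1 / sqrt 2) * (1 / sqrt 2) * (1 / sqrt 2) * (1 / sqrt (2::real)) = 1/4"
    by (simp add: field_simps)
  then have "complex_of_real ((1 / sqrt 2) * (1 / sqrt 2) * (1 / sqrt 2) * (1 / sqrt (2::real))) = 1/4"
    by (simp only: of_real_divide of_real_1 of_real_numeral)
  then show ?thesis by (simp only: of_real_mult complex_cnj_complex_of_real)
qed
lemma rho4_eq: "rho4 (b1,a1,b2,a2) (b1',a1',b2',a2') =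
  (if b1=a1 \<and> b1'=a1' \<and> b2=a2 \<and> b2'=a2' then 1/4 else 0)"
  unfolding rho4_def prod.case
  apply (simp only: PhiVec_eq)
  using k4 by simp
lemma prob4_eq: "prob4 P Q = (1/4) * (\<Sum>b1\<in>UNIV. \<Sum>b2\<in>UNIV. \<Sum>b1'\<in>UNIV. \<Sum>b2'\<in>UNIV.
   P (b1,b2) (b1',b2') * Q (b2,b1) (b2',b1'))"
  unfolding prob4_def trace4_def mult4_def tensorPQ_def
  apply (simp only: sp sb rho4_eq)
  apply (simp add: algebra_simps)
  done
lemma Pmeas_eq: "Pmeas v a (b1,b2) (b1',b2') = (if (b1 = b2) = (b1' = b2') then v a b1 * cnj (v a b1') else 0)"
  unfolding Pmeas_def proj11_def
  by (cases b1; cases b2; cases b1'; cases b2'; simp add: sb Vvec_eq xor2_def)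
lemma Qmeas_eq: "Qmeas w b (b2,b1) (b2',b1') = (if (b1 = b2) = (b1' = b2') then w b b1 * cnj (w b b1') else 0)"
  unfolding Qmeas_def proj11_def
  by (cases b1; cases b2; cases b1'; cases b2'; simp add: sb Wvec_eq xor2_def)
lemma prob_formula: "prob4 (Pmeas v a) (Qmeas w b) =
   complex_of_real ((1/2) * (cmod (v a False * w b False + v a True * w b True))\<^sup>2)"
proof -
  have ns: "\<And>z. complex_of_real ((cmod z)\<^sup>2) = z * cnj z"
    by (rule complex_norm_square)
  have "complex_of_real ((1/2) * (cmod (v a False * w b False + v a True * w b True))\<^sup>2)
     = (1/2) * ((v a False * w b False + v a True * w b True) * cnj (v a False * w b False + v a True * w b True))"
    by (simp only: of_real_mult ns) simp
  moreover have "prob4 (Pmeas v a) (Qmeas w b) = (1/2) * ((v a False * w b False + v a True * w b True) * cnj (v a False * w b False + v a True * w b True))"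
    unfolding prob4_eq Pmeas_eq Qmeas_eq
    by (simp add: sb algebra_simps)
  ultimately show ?thesis by simp
qed


lemma lin4: fixes A B C D :: complex
  assumes "A + C = 1" "A + B = 1" "C + D = 1" shows "B + D = 1"
proof -
  have "B + D = (A + B) + (C + D) - (A + C)" by (simp add: algebra_simps)
  then show ?thesis using assms by simp
qed
lemma lin3: fixes A B C :: complex
  assumes "A + B = 1" "C + B = 1" shows "A = C"
  using assms by (metis add_right_cancel)
lemma unit_col:
  assumes "onb2 v"
  shows "v False False * cnj (v False False) + v True False * cnj (v True False) = 1"
    "v False True * cnj (v False True) + v True True * cnj (v True True) = 1"
    "v False False * cnj (v False True) + v True False * cnj (v True True) = 0"
    "v False True * cnj (v False False) + v True True * cnj (v True False) = 0"
proof -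
  define p q r s where "p = v False False" "q = v False True" "r = v True False" "s = v True True"
  have o: "\<And>a a'. v a False * cnj (v a' False) + v a True * cnj (v a' True) = (if a = a' then 1 else 0)"
    using assms unfolding onb2_def sb by blast
  have h1: "p * cnj p + q * cnj q = 1" using o[of False False] unfolding p_q_r_s_def by simp
  have h2: "r * cnj r + s * cnj s = 1" using o[of True True] unfolding p_q_r_s_def by simp
  have h3: "p * cnj r + q * cnj s = 0" using o[of False True] unfolding p_q_r_s_def by simp
  have h4: "r * cnj p + s * cnj q = 0" using o[of True False] unfolding p_q_r_s_def by simp
  have a3: "p * cnj r = - (q * cnj s)" using h3 by (simp add: eq_neg_iff_add_eq_0)
  have a4: "r * cnj p = - (s * cnj q)" using h4 by (simp add: eq_neg_iff_add_eq_0)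
  have e1: "(p * cnj p) * (r * cnj r) = (q * cnj q) * (s * cnj s)"
  proof -
    have "(p * cnj r) * (r * cnj p) = (q * cnj s) * (s * cnj q)" using a3 a4 by simp
    then show ?thesis by (simp add: ac_simps)
  qed
  have c1: "p * cnj p + r * cnj r = 1"
  proof -
    have "q * cnj q = 1 - p * cnj p" "s * cnj s = 1 - r * cnj r" using h1 h2 by (simp_all add: eq_diff_eq add.commute)
    with e1 have "(p * cnj p) * (r * cnj r) = (1 - p * cnj p) * (1 - r * cnj r)" by simp
    then show ?thesis by (simp add: algebra_simps)
  qed
  have c2: "q * cnj q + s * cnj s = 1" using lin4[OF c1 h1 h2] .
  have ps: "p * cnj p = s * cnj s" using c1 h2 by (metis lin3 add.commute)
  have rq: "r * cnj r = q * cnj q" using c1 h1 by (metis lin3 add.commute)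
  define z where "z = p * cnj q + r * cnj s"
  have z1: "cnj p * z = 0"
  proof -
    have "cnj p * z = (p * cnj p) * cnj q + (r * cnj p) * cnj s"
      unfolding z_def by (simp add: algebra_simps)
    also have "\<dots> = (p * cnj p) * cnj q - cnj q * (s * cnj s)" using a4 by (simp add: ac_simps)
    finally show ?thesis using ps by simp
  qed
  have z2: "cnj r * z = 0"
  proof -
    have "cnj r * z = (p * cnj r) * cnj q + (r * cnj r) * cnj s"
      unfolding z_def by (simp add: algebra_simps)
    also have "\<dots> = cnj s * (q * cnj q) * (-1) + (r * cnj r) * cnj s" using a3 by (simp add: ac_simps)
    finally show ?thesis using rq by (simp add: algebra_simps)
  qed
  have "z = 0"
  proof (rule ccontr)
    assume "z \<noteq> 0"
    then have "cnj p = 0" "cnj r = 0" using z1 z2 by simp_all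
    then show False using c1 by simp
  qed
  then show g: "v False False * cnj (v False True) + v True False * cnj (v True True) = 0"
    unfolding z_def p_q_r_s_def .
  have "cnj (v False False * cnj (v False True) + v True False * cnj (v True True)) = 0"
    using g by simp
  then show "v False True * cnj (v False False) + v True True * cnj (v True False) = 0"
    by (simp add: ac_simps)
  show "v False False * cnj (v False False) + v True False * cnj (v True False) = 1"
    using c1 unfolding p_q_r_s_def .
  show "v False True * cnj (v False True) + v True True * cnj (v True True) = 1"
    using c2 unfolding p_q_r_s_def .
qed



lemma row_norm:
  assumes "onb2 v" shows "(cmod (v a False))\<^sup>2 + (cmod (v a True))\<^sup>2 = 1"
proof -
  have "v a False * cnj (v a False) + v a True * cnj (v a True) = 1"
    using assms unfolding onb2_def sb by (metis (full_types))
  then have "complex_of_real ((cmod (v a False))\<^sup>2 + (cmod (v a True))\<^sup>2) = 1"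
    by (simp only: of_real_add complex_norm_square)
  then show ?thesis by (metis of_real_eq_1_iff)
qed

lemma pureV: assumes "onb2 v" shows "pure11 (Vvec v a l)"
proof -
  have n: "(\<Sum>b\<in>UNIV. \<Sum>x\<in>UNIV. (cmod (Vvec v a l b x))\<^sup>2) = 1"
    using row_norm[OF assms, of a] by (cases l) (simp_all only: sb; simp add: Vvec_eq xor2_def)+
  have p: "(\<forall>b x. b \<noteq> x \<longrightarrow> Vvec v a l b x = 0) \<or> (\<forall>b x. b = x \<longrightarrow> Vvec v a l b x = 0)"
    by (cases l) (simp_all add: Vvec_eq xor2_def)
  show ?thesis unfolding pure11_def using n p by blast
qed

lemma pureW: assumes "onb2 w" shows "pure11 (Wvec w b l)"
proof -
  have n: "(\<Sum>y\<in>UNIV. \<Sum>x\<in>UNIV. (cmod (Wvec w b l y x))\<^sup>2) = 1"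
    using row_norm[OF assms, of b] by (cases l) (simp_all only: sb; simp add: Wvec_eq xor2_def)+
  have p: "(\<forall>y x. y \<noteq> x \<longrightarrow> Wvec w b l y x = 0) \<or> (\<forall>y x. y = x \<longrightarrow> Wvec w b l y x = 0)"
    by (cases l) (simp_all add: Wvec_eq xor2_def)
  show ?thesis unfolding pure11_def using n p by blast
qed



lemma sum2: "(\<Sum>k<(2::nat). f k) = f 0 + f 1"
  by (simp add: numeral_2_eq_2)

lemma adm_of: fixes psi :: "bool \<Rightarrow> vec11" assumes "\<And>l. pure11 (psi l)"
  shows "admissible_effect11 (\<lambda>x y. \<Sum>l\<in>UNIV. proj11 (psi l) x y)"
  unfolding admissible_effect11_def
  apply (rule exI[of _ 2], rule exI[of _ "\<lambda>_. 1"], rule exI[of _ "\<lambda>k::nat. psi (k = 1)"])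
  using assms by (simp add: sum2 sb add.commute)



lemma col_sum: assumes "onb2 v"
  shows "(\<Sum>a\<in>UNIV. v a i * cnj (v a j)) = (if i = j then 1 else 0)"
proof -
  note u = unit_col[OF assms]
  have f: "(\<Sum>a\<in>UNIV. v a False * cnj (v a False)) = 1" "(\<Sum>a\<in>UNIV. v a True * cnj (v a True)) = 1"
     "(\<Sum>a\<in>UNIV. v a False * cnj (v a True)) = 0" "(\<Sum>a\<in>UNIV. v a True * cnj (v a False)) = 0"
    using u by (simp_all only: sb)
  show ?thesis by (cases i; cases j) (simp_all add: f)
qed

lemma sumif: "(\<Sum>a\<in>A. if C then f a else 0) = (if C then (\<Sum>a\<in>A. f a) else 0)"
  by simp

lemma validP: assumes "onb2 v" shows "valid_meas11 (Pmeas v)"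
  unfolding valid_meas11_def
proof (intro conjI allI)
  fix a show "admissible_effect11 (Pmeas v a)"
    unfolding Pmeas_def by (rule adm_of, rule pureV[OF assms])
next
  fix x y :: "bool \<times> bool"
  note u = unit_col[OF assms]
  show "(\<Sum>a\<in>UNIV. Pmeas v a x y) = id11 x y"
  proof -
    obtain b1 b2 b1' b2' where xy: "x = (b1,b2)" "y = (b1',b2')" by (cases x; cases y) auto
    have "(\<Sum>a\<in>UNIV. Pmeas v a (b1,b2) (b1',b2')) = (if (b1 = b2) = (b1' = b2') then (if b1 = b1' then 1 else 0) else 0)"
      using col_sum[OF assms] by (simp add: Pmeas_eq sumif) (cases b1; cases b2; cases b1'; cases b2'; simp)
    then show ?thesis unfolding id11_def xy
      by (cases b1; cases b2; cases b1'; cases b2') simp_all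
  qed
qed

lemma validQ: assumes "onb2 w" shows "valid_meas11 (Qmeas w)"
  unfolding valid_meas11_def
proof (intro conjI allI)
  fix a show "admissible_effect11 (Qmeas w a)"
    unfolding Qmeas_def by (rule adm_of, rule pureW[OF assms])
next
  fix x y :: "bool \<times> bool"
  note u = unit_col[OF assms]
  show "(\<Sum>a\<in>UNIV. Qmeas w a x y) = id11 x y"
  proof -
    obtain b1 b2 b1' b2' where xy: "x = (b1,b2)" "y = (b1',b2')" by (cases x; cases y) auto
    have "(\<Sum>a\<in>UNIV. Qmeas w a (b1,b2) (b1',b2')) = (if (b1 = b2) = (b1' = b2') then (if b2 = b2' then 1 else 0) else 0)"
      using col_sum[OF assms] by (simp add: Qmeas_eq sumif) (cases b1; cases b2; cases b1'; cases b2'; simp)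
    then show ?thesis unfolding id11_def xy
      by (cases b1; cases b2; cases b1'; cases b2') simp_all
  qed
qed


lemma Re_prob_real:
  "Re (prob4 (Pmeas (\<lambda>a i. complex_of_real (V a i)) a) (Qmeas (\<lambda>b i. complex_of_real (W b i)) b)) =
    (1/2) * (V a False * W b False + V a True * W b True)\<^sup>2"
proof -
  have "cmod (complex_of_real (V a False) * complex_of_real (W b False) + complex_of_real (V a True) * complex_of_real (W b True))
     = \<bar>V a False * W b False + V a True * W b True\<bar>"
    by (metis norm_of_real of_real_add of_real_mult)
  then show ?thesis by (simp add: prob_formula)
qed

definition cc :: real where "cc = sqrt (2 + sqrt 2) / 2"
definition ss :: real where "ss = sqrt (2 - sqrt 2) / 2"
definition hh :: real where "hh = 1 / sqrt 2"

lemma cc2: "cc * cc = (2 + sqrt 2) / 4"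
proof -
  have "sqrt 2 \<le> 2" using sqrt2_less_2 by simp
  then show ?thesis unfolding cc_def by (simp add: field_simps)
qed
lemma ss2: "ss * ss = (2 - sqrt 2) / 4"
proof -
  have "sqrt 2 \<le> 2" using sqrt2_less_2 by simp
  then show ?thesis unfolding ss_def by (simp add: field_simps)
qed
lemma cs: "cc * ss = sqrt 2 / 4"
proof -
  have "(2 + sqrt 2) * (2 - sqrt 2) = 2" by (simp add: algebra_simps)
  then have "sqrt (2 + sqrt 2) * sqrt (2 - sqrt 2) = sqrt 2" by (metis real_sqrt_mult)
  then show ?thesis unfolding cc_def ss_def by simp
qed
lemma sc1: "ss * ss + cc * cc = 1" "cc * cc + ss * ss = 1" using cc2 ss2 by (simp_all add: field_simps)
lemma hh2: "hh * hh = 1/2" unfolding hh_def by (simp add: field_simps)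

definition VV :: "bool \<Rightarrow> bool \<Rightarrow> bool \<Rightarrow> real" where
  "VV x a i = (if x then (if a \<and> i then - hh else hh) else (if a = i then 1 else 0))"
definition WW :: "bool \<Rightarrow> bool \<Rightarrow> bool \<Rightarrow> real" where
  "WW y b i = (if b = i then cc else if b then (if y then ss else - ss) else (if y then - ss else ss))"

lemma onb_real: assumes "\<And>a a'. (\<Sum>i\<in>UNIV. V a i * V a' i) = (if a = a' then 1 else 0)"
  shows "onb2 (\<lambda>a i. complex_of_real (V a i))"
  unfolding onb2_def
proof (intro allI)
  fix a a'
  have "(\<Sum>i\<in>UNIV. complex_of_real (V a i) * cnj (complex_of_real (V a' i))) = complex_of_real (\<Sum>i\<in>UNIV. V a i * V a' i)"
    by simp
  then show "(\<Sum>i\<in>UNIV. complex_of_real (V a i) * cnj (complex_of_real (V a' i))) = (if a = a' then 1 else 0)"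
    using assms by simp
qed

lemma onbV: "onb2 (\<lambda>a i. complex_of_real (VV x a i))"
  by (rule onb_real) (cases x; auto simp: sb VV_def hh2)

lemma onbW: "onb2 (\<lambda>a i. complex_of_real (WW y a i))"
  by (rule onb_real) (cases y; auto simp: sb WW_def sc1 algebra_simps)

lemma poly_id: fixes hh cc ss :: real shows
  "2 * cc\<^sup>2 + ((hh * cc + hh * ss)\<^sup>2 + ((- (hh * ss) - hh * cc)\<^sup>2 / 2 + ((hh * ss + hh * cc)\<^sup>2 / 2 - (hh * ss - hh * cc)\<^sup>2 / 2)) - 2 * ss\<^sup>2) - 3 * (hh * cc - hh * ss)\<^sup>2 / 2
   = 2 * (cc * cc) - 2 * (ss * ss) + 8 * (hh * hh) * (cc * ss)"
  by (simp add: power2_eq_square field_simps)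

lemma chsh_val: "chsh (\<lambda>x. Pmeas (\<lambda>a i. complex_of_real (VV x a i))) (\<lambda>y. Qmeas (\<lambda>b i. complex_of_real (WW y b i))) = 2 * sqrt 2"
  unfolding chsh_def corr_def
  apply (simp only: Re_prob_real sb)
  apply (simp add: VV_def WW_def pm1_def)
  apply (simp only: poly_id cc2 ss2 hh2 cs)
  apply (simp add: field_simps)
  done





theorem mainTheorem3:
  shows "(\<forall>v w. onb2 v \<and> onb2 w \<longrightarrow>
            valid_meas11 (Pmeas v) \<and> valid_meas11 (Qmeas w) \<and>
            (\<forall>a b. prob4 (Pmeas v a) (Qmeas w b) =
               complex_of_real ((1/2) * (cmod (v a False * w b False + v a True * w b True))\<^sup>2)))
         \<and> (\<exists>vs ws. (\<forall>x. onb2 (vs x)) \<and> (\<forall>y. onb2 (ws y)) \<and>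
              (\<forall>x. valid_meas11 (Pmeas (vs x))) \<and> (\<forall>y. valid_meas11 (Qmeas (ws y))) \<and>
              chsh (\<lambda>x. Pmeas (vs x)) (\<lambda>y. Qmeas (ws y)) = 2 * sqrt 2 \<and>
              chsh (\<lambda>x. Pmeas (vs x)) (\<lambda>y. Qmeas (ws y)) > 2)"
  proof (intro conjI allI impI)
  fix v w :: "bool \<Rightarrow> bool \<Rightarrow> complex"
  assume h: "onb2 v \<and> onb2 w"
  then show "valid_meas11 (Pmeas v)" using validP by blast
  show "valid_meas11 (Qmeas w)" using validQ h by blast
  fix a b
  show "prob4 (Pmeas v a) (Qmeas w b) =
               complex_of_real ((1/2) * (cmod (v a False * w b False + v a True * w b True))\<^sup>2)"
    by (rule prob_formula)
next
  have s: "sqrt (2::real) > 1" by simp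
  show "\<exists>vs ws. (\<forall>x. onb2 (vs x)) \<and> (\<forall>y. onb2 (ws y)) \<and>
              (\<forall>x. valid_meas11 (Pmeas (vs x))) \<and> (\<forall>y. valid_meas11 (Qmeas (ws y))) \<and>
              chsh (\<lambda>x. Pmeas (vs x)) (\<lambda>y. Qmeas (ws y)) = 2 * sqrt 2 \<and>
              chsh (\<lambda>x. Pmeas (vs x)) (\<lambda>y. Qmeas (ws y)) > 2"
    apply (rule exI[of _ "\<lambda>x a i. complex_of_real (VV x a i)"])
    apply (rule exI[of _ "\<lambda>y b i. complex_of_real (WW y b i)"])
    apply (intro conjI allI)
         apply (rule onbV)
        apply (rule onbW)
       apply (rule validP[OF onbV])
      apply (rule validQ[OF onbW])
     apply (rule chsh_val)
    apply (subst chsh_val)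
    using s apply linarith
    done
qed

end
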